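(* Let $n,t$ be nonnegative integers with $n\ge 3t+1$, let $\mathcal S_1=\{1,\dots,n\}$ be the set of all nodes, and let $\mathcal F\subseteq \mathcal S_1$ be the set of dishonest nodes with $|\mathcal F|\le t$. Define a family of sets $(\mathcal S_g)_{g\ge 1}$ recursively: for each $g\ge1$, $\mathcal S_g$ is partitioned into two disjoint sets $\mathcal S_{2g}$ and $\mathcal S_{2g+1}$ with $\mathcal S_g=\mathcal S_{2g}\cup\mathcal S_{2g+1}$, $|\mathcal S_{2g}|=\lfloor|\mathcal S_g|/2\rfloor$ and $|\mathcal S_{2g+1}|=\lceil|\mathcal S_g|/2\rceil$ (the choice of partition is arbitrary subject to these sizes). Then there exists a network chain with good resilience: an infinite sequence of indices $g_1=1,g_2,g_3,\dots$ with $g_{r+1}\in\{2g_r,\,2g_r+1\}$ for all $r\ge1$ such that every $\mathcal S_{g_r}$ has good resilience, i.e. $|\mathcal S_{g_r}\cap\mathcal F|<|\mathcal S_{g_r}|/3$ for all $r\ge 1$. *)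

theory Defs
  imports Complex_Main
begin

end

theory Submission
  imports Defs
begin

theorem mainTheorem2:
  fixes n t :: nat and F :: "nat set" and S :: "nat \<Rightarrow> nat set"
  assumes "n \<ge> 3 * t + 1"
    and "F \<subseteq> {1..n}" and "card F \<le> t"
    and "S 1 = {1..n}"
    and "\<And>g. g \<ge> 1 \<Longrightarrow> S g = S (2 * g) \<union> S (2 * g + 1)"
    and "\<And>g. g \<ge> 1 \<Longrightarrow> S (2 * g) \<inter> S (2 * g + 1) = {}"
    and "\<And>g. g \<ge> 1 \<Longrightarrow> card (S (2 * g)) = nat \<lfloor>real (card (S g)) / 2\<rfloor>"
    and "\<And>g. g \<ge> 1 \<Longrightarrow> card (S (2 * g + 1)) = nat \<lceil>real (card (S g)) / 2\<rceil>"
  shows "\<exists>gs :: nat \<Rightarrow> nat. gs 0 = 1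
           \<and> (\<forall>r. gs (Suc r) \<in> {2 * gs r, 2 * gs r + 1})
           \<and> (\<forall>r. real (card (S (gs r) \<inter> F)) < real (card (S (gs r))) / 3)"
proof -
  have finF: "finite F" using assms(2) finite_subset by blast
  define good where "good g \<longleftrightarrow> 3 * card (S g \<inter> F) < card (S g)" for g
  define nxt where "nxt g = (if good (2*g) then 2*g else 2*g+1)" for g
  have cardsum: "card (S g) = card (S (2*g)) + card (S (2*g+1))" if "g \<ge> 1" for g
  proof -
    have "nat \<lfloor>real (card (S g)) / 2\<rfloor> = card (S g) div 2"
      by (metis floor_divide_of_nat_eq nat_int of_nat_numeral)
    moreover have "nat \<lceil>real (card (S g)) / 2\<rceil> = (card (S g) + 1) div 2"
    proof -
      have "\<lceil>real (card (S g)) / 2\<rceil> = int ((card (S g) + 1) div 2)"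
      proof (cases "even (card (S g))")
        case True
        then obtain k where k: "card (S g) = 2*k" by blast
        then show ?thesis by simp
      next
        case False
        then obtain k where k: "card (S g) = 2*k+1" using oddE by blast
        have "real (2*k+1) / 2 = real k + 1/2" by simp
        then have "\<lceil>real (2*k+1) / 2\<rceil> = int k + 1"
          by (intro ceiling_unique) auto
        then show ?thesis using k by simp
      qed
      then show ?thesis by simp
    qed
    ultimately show ?thesis using assms(7,8)[OF that] by simp
  qed
  have fsum: "card (S g \<inter> F) = card (S (2*g) \<inter> F) + card (S (2*g+1) \<inter> F)" if "g \<ge> 1" for g
  proof -
    have "S g \<inter> F = (S (2*g) \<inter> F) \<union> (S (2*g+1) \<inter> F)" using assms(5)[OF that] by blast
    moreover have "(S (2*g) \<inter> F) \<inter> (S (2*g+1) \<inter> F) = {}" using assms(6)[OF that] by blast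
    ultimately show ?thesis using finF by (simp add: card_Un_disjoint)
  qed
  have step: "good (nxt g)" if "g \<ge> 1" "good g" for g
    using that cardsum[OF that(1)] fsum[OF that(1)] unfolding nxt_def good_def by auto
  define gs where "gs r = (nxt ^^ r) 1" for r
  have gs: "gs r \<ge> 1 \<and> good (gs r)" for r
  proof (induction r)
    case 0
    have "S 1 \<inter> F = F" using assms(2,4) by blast
    then show ?case using assms(1,3,4) by (simp add: gs_def good_def)
  next
    case (Suc r)
    have "gs (Suc r) = nxt (gs r)" by (simp add: gs_def)
    then show ?case using Suc step by (auto simp: nxt_def)
  qed
  show ?thesis
  proof (intro exI conjI allI)
    show "gs 0 = 1" by (simp add: gs_def)
  next
    fix r show "gs (Suc r) \<in> {2 * gs r, 2 * gs r + 1}" by (simp add: gs_def nxt_def)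
  next
    fix r show "real (card (S (gs r) \<inter> F)) < real (card (S (gs r))) / 3"
      using gs[of r] unfolding good_def by linarith
  qed
qed

end
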